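(* Let $\mathbf a\in\mathbb{R}^{\mathbb{N}}$ satisfy: (1) $\mathbf a\ge 0$, $\Delta\mathbf a\le 0$ and $(\Delta\mathbf a)_1<0$; and (2) $\Delta^2\mathbf a\ge 0$ and $(\Delta^2\mathbf a)_1>0$. Then the linear centrality $f^{\mathbf a}$ is rank monotone.
   Context: Graphs are finite directed graphs; $d_G(x,y)$ is the shortest directed path length from $x$ to $y$ ($\infty$ if none). The linear centrality is $f^{\mathbf a}_G(i)=\sum_{z\in V_G,\ d_G(z,i)<\infty}a_{d_G(z,i)}$. For a sequence $\mathbf a$, $\Delta\mathbf a$ is the sequence with $(\Delta\mathbf a)_0=0$ and $(\Delta\mathbf a)_i=a_{i+1}-a_i$ for $i>0$; $\Delta^2\mathbf a=\Delta(\Delta\mathbf a)$; $\mathbf a\ge0$ ($\le0$) means every entry is $\ge0$ ($\le 0$). For a graph $G$ and distinct nodes $x,y$ with $(x,y)\notin E_G$, let $G'$ be $G$ with the arc $x\to y$ added. A centrality $f$ is rank monotone if for all such $G,x,y$ and every node $w\ne y$: if $f_G(w)\le f_G(y)$ then $f_{G'}(w)<f_{G'}(y)$. *)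

theory Defs
  imports Main "HOL-Library.Extended_Nat"
begin

definition is_digraph :: "'v set \<Rightarrow> ('v \<times> 'v) set \<Rightarrow> bool" where
  "is_digraph V E \<longleftrightarrow> finite V \<and> E \<subseteq> V \<times> V"

definition dist :: "('v \<times> 'v) set \<Rightarrow> 'v \<Rightarrow> 'v \<Rightarrow> enat" where
  "dist E x y = (if \<exists>n. (x, y) \<in> E ^^ n
                 then enat (LEAST n. (x, y) \<in> E ^^ n) else \<infinity>)"

definition lin_centrality :: "(nat \<Rightarrow> real) \<Rightarrow> 'v set \<Rightarrow> ('v \<times> 'v) set \<Rightarrow> 'v \<Rightarrow> real" where
  "lin_centrality a V E i =
     (\<Sum>z \<in> {z \<in> V. dist E z i < \<infinity>}. a (the_enat (dist E z i)))"

definition Delta :: "(nat \<Rightarrow> real) \<Rightarrow> nat \<Rightarrow> real" where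
  "Delta a i = (if i = 0 then 0 else a (Suc i) - a i)"

definition rank_monotone :: "('v set \<Rightarrow> ('v \<times> 'v) set \<Rightarrow> 'v \<Rightarrow> real) \<Rightarrow> bool" where
  "rank_monotone f \<longleftrightarrow>
     (\<forall>V E x y. is_digraph V E \<and> x \<in> V \<and> y \<in> V \<and> x \<noteq> y \<and> (x, y) \<notin> E \<longrightarrow>
        (\<forall>w \<in> V. w \<noteq> y \<longrightarrow>
           f V E w \<le> f V E y \<longrightarrow> f V (insert (x, y) E) w < f V (insert (x, y) E) y))"

end

theory Submission imports Defs "HOL-Library.Extended_Nat" begin

definition gg :: "(nat \<Rightarrow> real) \<Rightarrow> enat \<Rightarrow> real" where
  "gg a d = (case d of enat n \<Rightarrow> a n | \<infinity> \<Rightarrow> 0)"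

lemma gg_enat[simp]: "gg a (enat n) = a n" and gg_inf[simp]: "gg a \<infinity> = 0"
  by (simp_all add: gg_def)

context
  fixes a :: "nat \<Rightarrow> real"
  assumes mono: "\<And>i. 1 \<le> i \<Longrightarrow> a (Suc i) \<le> a i"
    and conv: "\<And>i. 1 \<le> i \<Longrightarrow> a (Suc i) - a (Suc (Suc i)) \<le> a i - a (Suc i)"
    and nonneg: "\<And>i. 0 \<le> a i"
    and st1: "a 2 < a 1"
    and st: "a 2 - a 3 < a 1 - a 2"
begin

lemma anti_a: assumes "1 \<le> i" "i \<le> j" shows "a j \<le> a i"
  using assms(2) proof (induction j rule: dec_induct)
  case base then show ?case by simp
next
  case (step n) then show ?case using mono[of n] assms(1) by simp
qed

lemma b_mono: "1 \<le> i \<Longrightarrow> a (i+k) - a (Suc (i+k)) \<le> a i - a (Suc i)"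
proof (induction k)
  case 0 then show ?case by simp
next
  case (Suc k) then show ?case using conv[of "i+k"] by simp
qed

lemma gap: assumes "1 \<le> t" "t \<le> m" shows "a (t+k) - a (m+k) \<le> a t - a m"
  using assms(2) proof (induction m rule: dec_induct)
  case base then show ?case by simp
next
  case (step n) then show ?case using b_mono[of n k] assms(1) by simp
qed

lemma gap_strict: "2 \<le> m \<Longrightarrow> 1 \<le> k \<Longrightarrow> a (1+k) - a (m+k) < a 1 - a m"
proof -
  assume m: "2 \<le> m" and k: "1 \<le> k"
  have "a (2+(k-1)) - a (m+(k-1)) \<le> a 2 - a m" using gap[of 2 m "k-1"] m by simp
  moreover have "a (2+(k-1)) - a (Suc (2+(k-1))) \<le> a 2 - a 3" using b_mono[of 2 "k-1"]
    by (simp add: numeral_eq_Suc)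
  moreover have "2+(k-1) = 1+k" "m+(k-1) = m+k-1" "Suc (2+(k-1)) = 2+k" using k by auto
  moreover have "a (1+k) - a (2+k) \<le> a 2 - a 3" using b_mono[of 2 "k-1"] k
    by (simp add: numeral_eq_Suc)
  moreover have "a (2+k) - a (m+k) \<le> a 2 - a m" using gap[of 2 m k] m by simp
  ultimately show ?thesis using st by linarith
qed

lemma gg_nonneg: "0 \<le> gg a d"
  by (cases d) (simp_all add: nonneg)

lemma gg_le: assumes "1 \<le> t" "enat t < D" shows "gg a D \<le> a t"
proof (cases D)
  case (enat m) then show ?thesis using assms anti_a[of t m] by simp
qed (simp add: nonneg)

lemma key:
  fixes T K Dw Dy :: enat
  assumes T: "1 \<le> T" and K: "1 \<le> K" and D: "Dw \<le> Dy + K"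
  shows "gg a (min Dw (T+K)) - gg a Dw \<le> gg a (min Dy T) - gg a Dy"
proof (cases T)
  case infinity then show ?thesis by simp
next
  case (enat t)
  with T have t: "1 \<le> t" by (simp add: one_enat_def)
  show ?thesis
  proof (cases "Dy \<le> T")
    case True
    then have "Dw \<le> T + K" using D by (metis add_right_mono order_trans)
    then show ?thesis using True by (simp add: min_absorb1)
  next
    case False
    then have Dy: "enat t < Dy" using enat by simp
    have r: "gg a (min Dy T) - gg a Dy = a t - gg a Dy" using False enat by (simp add: min_absorb2)
    have r0: "0 \<le> a t - gg a Dy" using gg_le[OF t Dy] by simp
    show ?thesis
    proof (cases "Dw \<le> T + K")
      case True then show ?thesis using r r0 by (simp add: min_absorb1)
    next
      case False
      then obtain k where k: "K = enat k" by (cases K) auto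
      with K have k1: "1 \<le> k" by (simp add: one_enat_def)
      from False have l: "gg a (min Dw (T+K)) - gg a Dw = a (t+k) - gg a Dw"
        using enat k by (simp add: min_absorb2)
      show ?thesis
      proof (cases Dy)
        case infinity
        have "a (t+k) \<le> a t" using anti_a[of t "t+k"] t by simp
        then show ?thesis using l r infinity gg_nonneg[of Dw] by simp
      next
        case (enat m)
        then obtain p where p: "Dw = enat p" using D k by (cases Dw) auto
        have pm: "p \<le> m + k" using D p k enat by simp
        have pt: "t + k < p" using False p k \<open>T = enat t\<close> by simp
        have "a (m+k) \<le> a p" using anti_a[of p "m+k"] pm pt by simp
        moreover have "a (t+k) - a (m+k) \<le> a t - a m" using gap[of t m k] t Dy enat by simp
        ultimately show ?thesis using l r p enat by simp
      qed
    qed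
  qed
qed

lemma key_strict:
  fixes K Dw Dy :: enat
  assumes K: "1 \<le> K" and D: "Dw \<le> Dy + K" and Dy2: "2 \<le> Dy"
  shows "gg a (min Dw (1+K)) - gg a Dw < gg a (min Dy 1) - gg a Dy"
proof -
  have Dy1: "enat 1 < Dy" using Dy2 by (cases Dy) (auto simp: numeral_eq_enat)
  have r: "gg a (min Dy 1) - gg a Dy = a 1 - gg a Dy" using Dy1
    by (simp add: min_absorb2 one_enat_def)
  have g2: "gg a Dy \<le> a 2"
    using Dy2 anti_a[of 2] nonneg by (cases Dy) (auto simp: numeral_eq_enat)
  show ?thesis
  proof (cases "Dw \<le> 1 + K")
    case True then show ?thesis using r g2 st1 by (simp add: min_absorb1)
  next
    case False
    then obtain k where k: "K = enat k" by (cases K) auto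
    with K have k1: "1 \<le> k" by (simp add: one_enat_def)
    from False have l: "gg a (min Dw (1+K)) - gg a Dw = a (1+k) - gg a Dw"
      using k by (simp add: min_absorb2 one_enat_def)
    show ?thesis
    proof (cases Dy)
      case infinity
      have "a (1+k) \<le> a 2" using anti_a[of 2 "1+k"] k1 by simp
      then show ?thesis using l r infinity gg_nonneg[of Dw] st1 by simp
    next
      case (enat m)
      then obtain p where p: "Dw = enat p" using D k by (cases Dw) auto
      have pm: "p \<le> m + k" using D p k enat by simp
      have pt: "1 + k < p" using False p k by (simp add: one_enat_def)
      have m2: "2 \<le> m" using Dy2 enat by (simp add: numeral_eq_enat)
      have "a (m+k) \<le> a p" using anti_a[of p "m+k"] pm pt by simp
      moreover have "a (1+k) - a (m+k) < a 1 - a m" using gap_strict[of m k] m2 k1 by simp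
      ultimately show ?thesis using l r p enat by simp
    qed
  qed
qed

end

lemma relpow_mono_set: fixes E :: "('a \<times> 'a) set" shows "E \<subseteq> F \<Longrightarrow> (u,v) \<in> E ^^ n \<Longrightarrow> (u,v) \<in> F ^^ n"
proof (induction n arbitrary: v)
  case (Suc n)
  then obtain w where "(u,w) \<in> E ^^ n" "(w,v) \<in> E" by (auto elim: relpow_Suc_E)
  then show ?case using Suc by (auto intro: relpow_Suc_I)
qed simp

lemma dist_le: "(u,v) \<in> E ^^ n \<Longrightarrow> dist E u v \<le> enat n"
  unfolding dist_def by (auto intro: Least_le)

lemma dist_enatD: "dist E u v = enat m \<Longrightarrow> (u,v) \<in> E ^^ m"
  unfolding dist_def by (auto split: if_splits intro: LeastI)

lemma dist_infD: "dist E u v = \<infinity> \<Longrightarrow> (u,v) \<notin> E ^^ n"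
  unfolding dist_def by (auto split: if_splits)

lemma dist_0: "dist E u v = 0 \<longleftrightarrow> u = v"
proof
  assume "dist E u v = 0"
  then have "(u,v) \<in> E ^^ 0" using dist_enatD[of E u v 0] by (simp add: zero_enat_def)
  then show "u = v" by simp
next
  assume "u = v"
  then have "dist E u v \<le> enat 0" using dist_le[where E=E and u=u and v=v and n=0] by simp
  then show "dist E u v = 0" by (simp add: zero_enat_def[symmetric])
qed

lemma dist_1: "dist E u v = 1 \<Longrightarrow> (u,v) \<in> E"
  using dist_enatD[of E u v 1] by (simp add: one_enat_def)

lemma dist_edge: "(u,v) \<in> E \<Longrightarrow> dist E u v \<le> 1"
  using dist_le[where E=E and u=u and v=v and n=1] by (simp add: one_enat_def)

lemma dist_tri: "dist E u w \<le> dist E u v + dist E v w"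
proof (cases "dist E u v")
  case (enat m)
  show ?thesis
  proof (cases "dist E v w")
    case (enat n)
    have "(u,w) \<in> E ^^ (m+n)" using dist_enatD[OF \<open>dist E u v = enat m\<close>] dist_enatD[OF enat]
      by (auto simp: relpow_add)
    then show ?thesis using dist_le \<open>dist E u v = enat m\<close> enat by fastforce
  qed simp
qed simp

lemma ins_lower:
  "(z,v) \<in> (insert (x,y) E) ^^ n \<Longrightarrow> dist E z v \<le> enat n \<or> dist E z x + 1 + dist E y v \<le> enat n"
proof (induction n arbitrary: v)
  case 0
  then have "z = v" by simp
  then show ?case using dist_0[of E z v] by (simp add: zero_enat_def)
next
  case (Suc n)
  from Suc.prems obtain u where zu: "(z,u) \<in> (insert (x,y) E) ^^ n" and uv: "(u,v) \<in> insert (x,y) E"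
    by (auto elim: relpow_Suc_E)
  from Suc.IH[OF zu] have IH: "dist E z u \<le> enat n \<or> dist E z x + 1 + dist E y u \<le> enat n" .
  show ?case
  proof (cases "(u,v) \<in> E")
    case True
    have e: "dist E u v \<le> 1" by (rule dist_edge[OF True])
    have t1: "dist E z v \<le> dist E z u + 1" using dist_tri[of E z v u] e
      by (meson add_left_mono order_trans)
    have t2: "dist E y v \<le> dist E y u + 1" using dist_tri[of E y v u] e
      by (meson add_left_mono order_trans)
    from IH show ?thesis
    proof
      assume "dist E z u \<le> enat n"
      then have "dist E z v \<le> enat n + 1" using t1 by (meson add_right_mono order_trans)
      then show ?thesis by (simp add: eSuc_enat[symmetric] eSuc_plus_1)
    next
      assume h: "dist E z x + 1 + dist E y u \<le> enat n"
      have "dist E z x + 1 + dist E y v \<le> dist E z x + 1 + (dist E y u + 1)"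
        using t2 by (simp add: add_left_mono)
      also have "\<dots> = (dist E z x + 1 + dist E y u) + 1" by (simp add: add.assoc)
      also have "\<dots> \<le> enat n + 1" using h by (simp add: add_right_mono)
      finally show ?thesis by (simp add: eSuc_enat[symmetric] eSuc_plus_1)
    qed
  next
    case False
    with uv have u: "u = x" "v = y" by auto
    have "dist E z x \<le> enat n"
      using IH u by (metis add.commute add.left_commute le_iff_add order_trans)
    then have "dist E z x + 1 \<le> enat n + 1" by (simp add: add_right_mono)
    then show ?thesis using u dist_0[of E y y] by (simp add: eSuc_enat[symmetric] eSuc_plus_1)
  qed
qed

lemma dist_ins:
  "dist (insert (x,y) E) z v = min (dist E z v) (dist E z x + 1 + dist E y v)"
  (is "?d = min ?a ?b")
proof (rule antisym)
  have "?d \<le> ?a"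
  proof (cases ?a)
    case (enat m)
    then show ?thesis using dist_enatD[OF enat] relpow_mono_set[of E "insert (x,y) E"] dist_le
      by (metis subset_insertI)
  qed simp
  moreover have "?d \<le> ?b"
  proof (cases "dist E z x")
    case (enat p)
    show ?thesis
    proof (cases "dist E y v")
      case (enat q)
      have "(z,x) \<in> (insert (x,y) E) ^^ p" "(y,v) \<in> (insert (x,y) E) ^^ q"
        using dist_enatD[OF \<open>dist E z x = enat p\<close>] dist_enatD[OF enat]
          relpow_mono_set[of E "insert (x,y) E"] by auto
      then have "(z,v) \<in> (insert (x,y) E) ^^ (p + 1 + q)"
        unfolding relpow_add by auto
      then show ?thesis using dist_le \<open>dist E z x = enat p\<close> enat
        by (metis one_enat_def plus_enat_simps(1))
    qed simp
  qed simp
  ultimately show "?d \<le> min ?a ?b" by simp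
next
  show "min ?a ?b \<le> ?d"
  proof (cases ?d)
    case (enat n)
    from ins_lower[OF dist_enatD[OF enat]] show ?thesis using enat
      by (metis min.coboundedI1 min.coboundedI2)
  qed simp
qed


lemma lin_gg: "finite V \<Longrightarrow> lin_centrality a V E i = (\<Sum>z\<in>V. gg a (dist E z i))"
  unfolding lin_centrality_def
  apply (subst sum.inter_filter, assumption)
  apply (rule sum.cong, simp)
  subgoal for z by (cases "dist E z i") auto
  done

lemma enat_ge1: "(K::enat) \<noteq> 0 \<Longrightarrow> 1 \<le> K"
  by (cases K) (auto simp: one_enat_def zero_enat_def)

theorem proposition4:
  fixes a :: "nat \<Rightarrow> real"
  assumes "\<forall>i. a i \<ge> 0"
    and "\<forall>i. Delta a i \<le> 0"
    and "Delta a 1 < 0"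
    and "\<forall>i. Delta (Delta a) i \<ge> 0"
    and "Delta (Delta a) 1 > 0"
  shows "rank_monotone (lin_centrality a :: 'v set \<Rightarrow> ('v \<times> 'v) set \<Rightarrow> 'v \<Rightarrow> real)"
proof -
  have mono: "\<And>i. 1 \<le> i \<Longrightarrow> a (Suc i) \<le> a i"
  proof -
    fix i :: nat assume "1 \<le> i" then show "a (Suc i) \<le> a i" using spec[OF assms(2), of i] by (auto simp: Delta_def split: if_splits)
  qed
  have conv: "\<And>i. 1 \<le> i \<Longrightarrow> a (Suc i) - a (Suc (Suc i)) \<le> a i - a (Suc i)"
  proof -
    fix i :: nat assume "1 \<le> i" then show "a (Suc i) - a (Suc (Suc i)) \<le> a i - a (Suc i)"
      using spec[OF assms(4), of i] by (simp add: Delta_def split: if_splits)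
  qed
  have nonneg: "\<And>i. 0 \<le> a i" using assms(1) by simp
  have st1: "a 2 < a 1" using assms(3) by (simp add: Delta_def numeral_eq_Suc)
  have st: "a 2 - a 3 < a 1 - a 2" using assms(5) by (simp add: Delta_def numeral_eq_Suc)
  show ?thesis unfolding rank_monotone_def
  proof (intro allI impI ballI)
    fix V :: "'v set" and E x y w
    assume H: "is_digraph V E \<and> x \<in> V \<and> y \<in> V \<and> x \<noteq> y \<and> (x, y) \<notin> E"
      and w: "w \<in> V" "w \<noteq> y" and le: "lin_centrality a V E w \<le> lin_centrality a V E y"
    have fin: "finite V" using H by (simp add: is_digraph_def)
    define E' where "E' = insert (x,y) E"
    define F where "F z = gg a (dist E' z w) - gg a (dist E z w)" for z
    define G where "G z = gg a (dist E' z y) - gg a (dist E z y)" for z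
    have K: "1 \<le> dist E y w" using w dist_0[of E y w] enat_ge1 by metis
    have dy: "\<And>z. dist E' z y = min (dist E z y) (dist E z x + 1)"
      unfolding E'_def dist_ins using dist_0[of E y y] by simp
    have dw: "\<And>z. dist E' z w = min (dist E z w) ((dist E z x + 1) + dist E y w)"
      unfolding E'_def dist_ins by simp
    have T: "\<And>z. 1 \<le> dist E z x + 1" by simp
    have FG: "\<forall>z\<in>V. F z \<le> G z"
    proof
      fix z assume "z \<in> V"
      have D: "dist E z w \<le> dist E z y + dist E y w" by (rule dist_tri)
      show "F z \<le> G z" unfolding F_def G_def dy dw
        using key[OF mono conv nonneg st1 st T K D] by simp
    qed
    have "dist E x y \<noteq> 0" using H dist_0[of E x y] by simp
    moreover have "dist E x y \<noteq> 1" using H dist_1[of E x y] by auto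
    ultimately have Dy2: "2 \<le> dist E x y"
      by (cases "dist E x y") (auto simp: one_enat_def zero_enat_def numeral_eq_enat)
    have strict: "F x < G x"
    proof -
      have "dist E x x = 0" using dist_0[of E x x] by simp
      then have e1: "dist E' x y = min (dist E x y) 1" "dist E' x w = min (dist E x w) (1 + dist E y w)"
        using dy[of x] dw[of x] by simp_all
      show ?thesis unfolding F_def G_def e1
        using key_strict[OF mono conv nonneg st1 st K dist_tri Dy2] by simp
    qed
    have "sum F V < sum G V"
      using sum_strict_mono_ex1[OF fin FG] strict H by blast
    then have "lin_centrality a V E' w - lin_centrality a V E w < lin_centrality a V E' y - lin_centrality a V E y"
      unfolding lin_gg[OF fin] F_def G_def by (simp add: sum_subtractf)
    then show "lin_centrality a V (insert (x, y) E) w < lin_centrality a V (insert (x, y) E) y"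
      using le unfolding E'_def by simp
  qed
qed

end
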